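(* Let $G$ be a finite abstract simplicial complex. Then $\sum_{x\in G} \omega(x)\big(1-\chi(S(x))\big)=\chi(G)$.
   Context: A finite abstract simplicial complex $G$ is a finite set of non-empty finite sets closed under taking non-empty subsets. $\omega(x)=(-1)^{|x|-1}$ and $\chi(G)=\sum_{x\in G}\omega(x)$. The Barycentric refinement $G_1$ is the graph with vertex set $G$ where $x\neq y$ are adjacent iff $x\subset y$ or $y\subset x$. The unit sphere $S(x)$ is the set of simplices $y\in G$ with $y\subsetneq x$ or $x\subsetneq y$; $\chi(S(x))$ denotes the Euler characteristic of the Whitney (clique) complex of the subgraph of $G_1$ induced on $S(x)$, i.e. $\sum_{K}(-1)^{|K|-1}$ over all non-empty cliques $K$ of that induced subgraph. *)

theory Defs
  imports Main
begin

definition is_asc :: "'a set set \<Rightarrow> bool" where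
  "is_asc G \<longleftrightarrow> finite G \<and>
     (\<forall>x\<in>G. x \<noteq> {} \<and> finite x) \<and>
     (\<forall>x\<in>G. \<forall>y. y \<noteq> {} \<and> y \<subseteq> x \<longrightarrow> y \<in> G)"

definition omega :: "'a set \<Rightarrow> int" where
  "omega x = (-1) ^ (card x - 1)"

definition chi :: "'a set set \<Rightarrow> int" where
  "chi G = (\<Sum>x\<in>G. omega x)"

text \<open>Adjacency in the Barycentric refinement G1: distinct and comparable.\<close>
definition bary_adj :: "'a set \<Rightarrow> 'a set \<Rightarrow> bool" where
  "bary_adj x y \<longleftrightarrow> x \<noteq> y \<and> (x \<subseteq> y \<or> y \<subseteq> x)"

definition cliques :: "'a set set \<Rightarrow> 'a set set set" where
  "cliques V = {K. K \<subseteq> V \<and> K \<noteq> {} \<and> (\<forall>x\<in>K. \<forall>y\<in>K. x \<noteq> y \<longrightarrow> bary_adj x y)}"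

text \<open>Euler characteristic of the Whitney complex of the induced subgraph on V.\<close>
definition chi_whitney :: "'a set set \<Rightarrow> int" where
  "chi_whitney V = (\<Sum>K\<in>cliques V. (-1) ^ (card K - 1))"

definition unit_sphere :: "'a set set \<Rightarrow> 'a set \<Rightarrow> 'a set set" where
  "unit_sphere G x = {y\<in>G. y \<subset> x \<or> x \<subset> y}"

end

theory Submission
  imports Defs
begin

definition chs :: "('b \<Rightarrow> 'b \<Rightarrow> bool) \<Rightarrow> 'b set \<Rightarrow> 'b set set" where
  "chs lt V = {K. K \<subseteq> V \<and> (\<forall>x\<in>K. \<forall>y\<in>K. x \<noteq> y \<longrightarrow> lt x y \<or> lt y x)}"

definition cs :: "('b \<Rightarrow> 'b \<Rightarrow> bool) \<Rightarrow> 'b set \<Rightarrow> int" where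
  "cs lt V = (\<Sum>K\<in>chs lt V. (-1) ^ card K)"

lemma chs_finite: "finite V \<Longrightarrow> finite (chs lt V)"
  by (rule finite_subset[of _ "Pow V"]) (auto simp: chs_def)

lemma chs_flip: "chs (\<lambda>a b. lt b a) V = chs lt V"
  unfolding chs_def by blast

lemma chs_int: "K \<in> chs lt V \<Longrightarrow> K \<inter> W \<in> chs lt W"
  unfolding chs_def by blast

lemma chs_sub: "K \<in> chs lt V \<Longrightarrow> K \<subseteq> V"
  unfolding chs_def by blast

lemma chs_ch: "K \<in> chs lt V \<Longrightarrow> a \<in> K \<Longrightarrow> b \<in> K \<Longrightarrow> a \<noteq> b \<Longrightarrow> lt a b \<or> lt b a"
  unfolding chs_def by blast

lemma chain_max:
  assumes tr: "\<And>a b c. lt a b \<Longrightarrow> lt b c \<Longrightarrow> lt a c"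
    and fin: "finite K" and ne: "K \<noteq> {}"
    and ch: "\<forall>x\<in>K. \<forall>y\<in>K. x \<noteq> y \<longrightarrow> lt x y \<or> lt y x"
  shows "\<exists>m\<in>K. \<forall>y\<in>K. y \<noteq> m \<longrightarrow> lt y m"
  using fin ne ch
proof (induction K rule: finite_ne_induct)
  case (singleton x) then show ?case by auto
next
  case (insert a F)
  then obtain m where m: "m \<in> F" "\<forall>y\<in>F. y \<noteq> m \<longrightarrow> lt y m" by auto
  have "a \<noteq> m" using insert m by auto
  then have "lt a m \<or> lt m a" using insert m by auto
  then show ?case
  proof
    assume "lt a m" then show ?thesis using m by auto
  next
    assume am: "lt m a"
    show ?thesis
      apply (rule bexI[of _ a])
      using m am tr[of _ m a] insert(2) by auto
  qed
qed

lemma chs_rec: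
  assumes tr: "\<And>a b c. lt a b \<Longrightarrow> lt b c \<Longrightarrow> lt a c"
    and irr: "\<And>a. \<not> lt a a"
    and fin: "finite V"
  shows "cs lt V = 1 - (\<Sum>m\<in>V. cs lt {y\<in>V. lt y m})"
proof -
  define M where "M K = (THE m. m \<in> K \<and> (\<forall>y\<in>K. y \<noteq> m \<longrightarrow> lt y m))" for K
  have Mu: "M K = m" if "m \<in> K" "\<forall>y\<in>K. y \<noteq> m \<longrightarrow> lt y m" for K m
    unfolding M_def
  proof (rule the_equality)
    show "m \<in> K \<and> (\<forall>y\<in>K. y \<noteq> m \<longrightarrow> lt y m)" using that by blast
  next
    fix m' assume m': "m' \<in> K \<and> (\<forall>y\<in>K. y \<noteq> m' \<longrightarrow> lt y m')"
    show "m' = m"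
    proof (rule ccontr)
      assume "m' \<noteq> m"
      then have "lt m' m" "lt m m'" using that m' by auto
      then show False using tr[of m' m m'] irr by auto
    qed
  qed
  have Mp: "M K \<in> K \<and> (\<forall>y\<in>K. y \<noteq> M K \<longrightarrow> lt y (M K))" if "K \<in> chs lt V" "K \<noteq> {}" for K
  proof -
    have "finite K" using that fin by (auto simp: chs_def intro: finite_subset)
    have "\<exists>m\<in>K. \<forall>y\<in>K. y \<noteq> m \<longrightarrow> lt y m"
    proof (rule chain_max)
      show "\<And>a b c. lt a b \<Longrightarrow> lt b c \<Longrightarrow> lt a c" by (rule tr)
    qed (use that \<open>finite K\<close> in \<open>auto simp: chs_def\<close>)
    then obtain m where "m\<in>K" "\<forall>y\<in>K. y \<noteq> m \<longrightarrow> lt y m" by blast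
    then show ?thesis using Mu by metis
  qed
  have e: "{} \<in> chs lt V" by (auto simp: chs_def)
  have "cs lt V = 1 + (\<Sum>K\<in>chs lt V - {{}}. (-1) ^ card K)"
    unfolding cs_def using sum.remove[OF chs_finite[OF fin] e, of "\<lambda>K. (-1::int) ^ card K"] by simp
  also have "(\<Sum>K\<in>chs lt V - {{}}. (-1::int) ^ card K) =
     (\<Sum>p\<in>Sigma V (\<lambda>m. chs lt {y\<in>V. lt y m}). (-1) ^ card (insert (fst p) (snd p)))"
  proof (rule sum.reindex_bij_witness[where i="\<lambda>p. insert (fst p) (snd p)" and j="\<lambda>K. (M K, K - {M K})"])
    fix K assume K: "K \<in> chs lt V - {{}}"
    then show "insert (fst (M K, K - {M K})) (snd (M K, K - {M K})) = K" using Mp by auto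
    show "(M K, K - {M K}) \<in> Sigma V (\<lambda>m. chs lt {y\<in>V. lt y m})"
      using K Mp[of K] by (auto simp: chs_def)
  next
    fix p assume p: "p \<in> Sigma V (\<lambda>m. chs lt {y\<in>V. lt y m})"
    obtain m A where pe: "p = (m, A)" by force
    have mA: "m \<notin> A" using p pe irr by (auto simp: chs_def)
    have "M (insert m A) = m" using p pe by (intro Mu) (auto simp: chs_def)
    then show "(M (insert (fst p) (snd p)), insert (fst p) (snd p) - {M (insert (fst p) (snd p))}) = p"
      using pe mA by auto
    show "insert (fst p) (snd p) \<in> chs lt V - {{}}"
      using p pe by (auto simp: chs_def)
  next
    fix K assume "K \<in> chs lt V - {{}}"
    then show "(-1::int) ^ card (insert (fst (M K, K - {M K})) (snd (M K, K - {M K}))) = (-1) ^ card K"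
      using Mp by (metis Diff_iff fst_conv insert_Diff singletonI snd_conv)
  qed
  also have "\<dots> = (\<Sum>m\<in>V. \<Sum>A\<in>chs lt {y\<in>V. lt y m}. (-1) ^ card (insert m A))"
    using fin chs_finite[of "{y\<in>V. lt y m}" lt for m] by (subst sum.Sigma) (auto simp: case_prod_beta)
  also have "\<dots> = (\<Sum>m\<in>V. - cs lt {y\<in>V. lt y m})"
    unfolding cs_def sum_negf[symmetric]
  proof (intro sum.cong refl)
    fix m A assume "A \<in> chs lt {y\<in>V. lt y m}"
    then have "m \<notin> A" "finite A" using irr fin by (auto simp: chs_def intro: finite_subset)
    then show "(-1::int) ^ card (insert m A) = - ((-1) ^ card A)" by simp
  qed
  finally show ?thesis by (simp add: sum_negf)
qed


lemma pow_alt: "finite x \<Longrightarrow> (\<Sum>m\<in>Pow x. (-1::int) ^ card m) = (if x = {} then 1 else 0)"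
proof (induction x rule: finite_induct)
  case empty then show ?case by simp
next
  case (insert a F)
  have d: "Pow F \<inter> insert a ` Pow F = {}" using insert by auto
  have inj: "inj_on (insert a) (Pow F)" using insert by (auto simp: inj_on_def)
  have "(\<Sum>m\<in>insert a ` Pow F. (-1::int) ^ card m) = (\<Sum>m\<in>Pow F. (-1::int) ^ card (insert a m))"
    by (rule sum.reindex[OF inj, unfolded comp_def])
  also have "\<dots> = (\<Sum>m\<in>Pow F. - ((-1::int) ^ card m))"
  proof (intro sum.cong refl)
    fix m assume "m \<in> Pow F"
    then have "a \<notin> m" "finite m" using insert by (auto intro: finite_subset)
    then show "(-1::int) ^ card (insert a m) = - ((-1) ^ card m)" by simp
  qed
  finally have "(\<Sum>m\<in>insert a ` Pow F. (-1::int) ^ card m) = - (\<Sum>m\<in>Pow F. (-1::int) ^ card m)"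
    by (simp add: sum_negf)
  then show ?case using insert
    by (simp add: Pow_insert sum.union_disjoint[OF _ _ d])
qed

lemma omega_ne: "finite m \<Longrightarrow> m \<noteq> {} \<Longrightarrow> omega m = - ((-1) ^ card m)"
proof -
  assume "finite m" "m \<noteq> {}"
  then have "card m > 0" by (simp add: card_gt_0_iff)
  then obtain k where k: "card m = Suc k" using gr0_conv_Suc by blast
  show ?thesis unfolding omega_def k by simp
qed

lemma omega_sq: "omega m * omega m = 1"
proof -
  have "((-1::int) ^ (card m - 1)) * ((-1) ^ (card m - 1)) = ((-1) * (-1)) ^ (card m - 1)"
    by (rule power_mult_distrib[symmetric])
  then show ?thesis unfolding omega_def by simp
qed

lemma omega_sum: "finite x \<Longrightarrow> x \<noteq> {} \<Longrightarrow> (\<Sum>m\<in>Pow x - {{}}. omega m) = 1"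
proof -
  assume f: "finite x" and ne: "x \<noteq> {}"
  have "(\<Sum>m\<in>Pow x - {{}}. omega m) = (\<Sum>m\<in>Pow x - {{}}. - ((-1) ^ card m))"
    using f by (intro sum.cong refl omega_ne) (auto intro: finite_subset)
  also have "\<dots> = - ((\<Sum>m\<in>Pow x. (-1::int) ^ card m) - 1)"
    using sum.remove[of "Pow x" "{}" "\<lambda>m. (-1::int) ^ card m"] f by (simp add: sum_negf)
  also have "\<dots> = 1" using pow_alt[OF f] ne by simp
  finally show ?thesis .
qed

lemma cliques_chs: "cliques V = chs (\<subset>) V - {{}}"
  unfolding cliques_def chs_def bary_adj_def by blast

lemma cw_cs: "finite V \<Longrightarrow> 1 - chi_whitney V = cs (\<subset>) V"
proof -
  assume f: "finite V"
  have e: "{} \<in> chs (\<subset>) V" by (simp add: chs_def)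
  have "cs (\<subset>) V = 1 + (\<Sum>K\<in>chs (\<subset>) V - {{}}. (-1) ^ card K)"
    unfolding cs_def using sum.remove[OF chs_finite[OF f] e, of "\<lambda>K. (-1::int) ^ card K"] by simp
  moreover have "chi_whitney V = (\<Sum>K\<in>chs (\<subset>) V - {{}}. - ((-1) ^ card K))"
    unfolding chi_whitney_def cliques_chs
  proof (intro sum.cong refl)
    fix K assume K: "K \<in> chs (\<subset>) V - {{}}"
    then have "K \<subseteq> V" "K \<noteq> {}" using chs_sub[of K] by auto
    then have "finite K" "K \<noteq> {}" using f finite_subset by auto
    then show "(-1::int) ^ (card K - 1) = - ((-1) ^ card K)"
      using omega_ne[of K] by (simp add: omega_def)
  qed
  ultimately show ?thesis by (simp add: sum_negf)
qed

context
  fixes G :: "'a set set"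
  assumes G: "is_asc G"
begin

definition Bl where "Bl x = {y\<in>G. y \<subset> x}"
definition Ab where "Ab x = {y\<in>G. x \<subset> y}"

lemma finG: "finite G" using G by (simp add: is_asc_def)

lemma memG: "x \<in> G \<Longrightarrow> finite x \<and> x \<noteq> {}" using G by (simp add: is_asc_def)

lemma downG: "x \<in> G \<Longrightarrow> {y\<in>G. y \<subseteq> x} = Pow x - {{}}"
  using G unfolding is_asc_def by blast

lemma Bl_eq: "x \<in> G \<Longrightarrow> Bl x = Pow x - {{}} - {x}"
  using downG[of x] unfolding Bl_def by blast

lemma Bl_cs: "x \<in> G \<Longrightarrow> cs (\<subset>) (Bl x) = omega x"
proof (induction "card x" arbitrary: x rule: less_induct)
  case less
  have fx: "finite x" "x \<noteq> {}" using memG[OF less.prems] by auto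
  have fB: "finite (Bl x)" using finG by (simp add: Bl_def)
  have "cs (\<subset>) (Bl x) = 1 - (\<Sum>m\<in>Bl x. cs (\<subset>) {y\<in>Bl x. y \<subset> m})"
    by (rule chs_rec[OF _ _ fB]) auto
  also have "(\<Sum>m\<in>Bl x. cs (\<subset>) {y\<in>Bl x. y \<subset> m}) = (\<Sum>m\<in>Bl x. omega m)"
  proof (intro sum.cong refl)
    fix m assume m: "m \<in> Bl x"
    have "{y\<in>Bl x. y \<subset> m} = Bl m" using m by (auto simp: Bl_def)
    moreover have "card m < card x" using m fx by (auto simp: Bl_def intro: psubset_card_mono)
    ultimately show "cs (\<subset>) {y\<in>Bl x. y \<subset> m} = omega m"
      using less.hyps m by (auto simp: Bl_def)
  qed
  also have "(\<Sum>m\<in>Bl x. omega m) = 1 - omega x"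
  proof -
    have "x \<in> Pow x - {{}}" using fx by auto
    then have "(\<Sum>m\<in>Pow x - {{}}. omega m) = omega x + (\<Sum>m\<in>Pow x - {{}} - {x}. omega m)"
      using fx by (intro sum.remove) auto
    then show ?thesis using omega_sum[OF fx] Bl_eq[OF less.prems] by simp
  qed
  finally show ?case by simp
qed

definition h where "h m = cs (\<lambda>a b. b \<subset> a) (Ab m)"

lemma h_rec: "x \<in> G \<Longrightarrow> h x + (\<Sum>m\<in>Ab x. h m) = 1"
proof -
  assume x: "x \<in> G"
  have fA: "finite (Ab x)" using finG by (simp add: Ab_def)
  have "h x = 1 - (\<Sum>m\<in>Ab x. cs (\<lambda>a b. b \<subset> a) {y\<in>Ab x. m \<subset> y})"
    unfolding h_def by (rule chs_rec[OF _ _ fA]) auto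
  also have "(\<Sum>m\<in>Ab x. cs (\<lambda>a b. b \<subset> a) {y\<in>Ab x. m \<subset> y}) = (\<Sum>m\<in>Ab x. h m)"
  proof (intro sum.cong refl)
    fix m assume m: "m \<in> Ab x"
    have "{y\<in>Ab x. m \<subset> y} = Ab m" using m by (auto simp: Ab_def)
    then show "cs (\<lambda>a b. b \<subset> a) {y\<in>Ab x. m \<subset> y} = h m" by (simp add: h_def)
  qed
  finally show ?thesis by simp
qed

lemma h_sum: "x \<in> G \<Longrightarrow> (\<Sum>m\<in>{m\<in>G. x \<subseteq> m}. h m) = 1"
proof -
  assume x: "x \<in> G"
  have e: "{m\<in>G. x \<subseteq> m} = insert x (Ab x)" using x by (auto simp: Ab_def)
  have "x \<notin> Ab x" by (simp add: Ab_def)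
  moreover have "finite (Ab x)" using finG by (simp add: Ab_def)
  ultimately show ?thesis using h_rec[OF x] e by simp
qed

lemma sphere_cs: "x \<in> G \<Longrightarrow> cs (\<subset>) (unit_sphere G x) = omega x * h x"
proof -
  assume x: "x \<in> G"
  let ?S = "unit_sphere G x"
  have fB: "finite (Bl x)" "finite (Ab x)" using finG by (auto simp: Bl_def Ab_def)
  have S: "?S = Bl x \<union> Ab x" by (auto simp: unit_sphere_def Bl_def Ab_def)
  have "cs (\<subset>) ?S = (\<Sum>p\<in>chs (\<subset>) (Bl x) \<times> chs (\<subset>) (Ab x). (-1::int) ^ card (fst p \<union> snd p))"
    unfolding cs_def
  proof (rule sum.reindex_bij_witness[where i="\<lambda>p. fst p \<union> snd p" and j="\<lambda>K. (K \<inter> Bl x, K \<inter> Ab x)"])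
    fix K assume K: "K \<in> chs (\<subset>) ?S"
    then have "K \<subseteq> Bl x \<union> Ab x" using chs_sub S by metis
    then show e: "fst (K \<inter> Bl x, K \<inter> Ab x) \<union> snd (K \<inter> Bl x, K \<inter> Ab x) = K"
      by auto
    show "(K \<inter> Bl x, K \<inter> Ab x) \<in> chs (\<subset>) (Bl x) \<times> chs (\<subset>) (Ab x)"
      using chs_int[OF K] by simp
    show "(-1::int) ^ card (fst (K \<inter> Bl x, K \<inter> Ab x) \<union> snd (K \<inter> Bl x, K \<inter> Ab x)) = (-1) ^ card K"
      using e by simp
  next
    fix p assume p: "p \<in> chs (\<subset>) (Bl x) \<times> chs (\<subset>) (Ab x)"
    then have sub: "fst p \<subseteq> Bl x" "snd p \<subseteq> Ab x" using chs_sub by (metis mem_Times_iff)+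
    have nn: "\<not> (y \<subset> x \<and> x \<subset> y)" for y :: "'a set" using psubset_trans[of y x y] by blast
    have dj: "Bl x \<inter> Ab x = {}" using nn unfolding Bl_def Ab_def by blast
    show "((fst p \<union> snd p) \<inter> Bl x, (fst p \<union> snd p) \<inter> Ab x) = p"
    proof -
      have "(fst p \<union> snd p) \<inter> Bl x = fst p" "(fst p \<union> snd p) \<inter> Ab x = snd p"
        using sub dj by blast+
      then show ?thesis by simp
    qed
    have ch: "fst p \<in> chs (\<subset>) (Bl x)" "snd p \<in> chs (\<subset>) (Ab x)"
      using p by auto
    have cr: "a \<subset> b" if "a \<in> fst p" "b \<in> snd p" for a b
    proof -
      have "a \<in> Bl x" "b \<in> Ab x" using that sub by blast+
      then have "a \<subset> x" "x \<subset> b" unfolding Bl_def Ab_def by simp_all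
      then show ?thesis by (rule psubset_trans)
    qed
    show "fst p \<union> snd p \<in> chs (\<subset>) ?S"
      unfolding chs_def S
    proof (intro CollectI conjI ballI impI)
      show "fst p \<union> snd p \<subseteq> Bl x \<union> Ab x" using sub by blast
      fix a b assume ab: "a \<in> fst p \<union> snd p" "b \<in> fst p \<union> snd p" "a \<noteq> b"
      show "a \<subset> b \<or> b \<subset> a"
        using ab(1,2)
      proof (elim UnE)
        assume "a \<in> fst p" "b \<in> fst p" then show ?thesis using chs_ch[OF ch(1) _ _ ab(3)] by simp
      next
        assume "a \<in> snd p" "b \<in> snd p" then show ?thesis using chs_ch[OF ch(2) _ _ ab(3)] by simp
      next
        assume "a \<in> fst p" "b \<in> snd p" then show ?thesis using cr by simp
      next
        assume "a \<in> snd p" "b \<in> fst p" then show ?thesis using cr by simp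
      qed
    qed
  qed
  also have "\<dots> = (\<Sum>p\<in>chs (\<subset>) (Bl x) \<times> chs (\<subset>) (Ab x). (-1::int) ^ card (fst p) * (-1) ^ card (snd p))"
  proof (intro sum.cong refl)
    fix p assume p: "p \<in> chs (\<subset>) (Bl x) \<times> chs (\<subset>) (Ab x)"
    then have sub: "fst p \<subseteq> Bl x" "snd p \<subseteq> Ab x" using chs_sub by (metis mem_Times_iff)+
    have dj: "Bl x \<inter> Ab x = {}" by (auto simp: Bl_def Ab_def)
    have "card (fst p \<union> snd p) = card (fst p) + card (snd p)"
      using sub dj fB by (intro card_Un_disjoint) (auto intro: finite_subset)
    then show "(-1::int) ^ card (fst p \<union> snd p) = (-1) ^ card (fst p) * (-1) ^ card (snd p)"
      by (simp add: power_add)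
  qed
  also have "\<dots> = cs (\<subset>) (Bl x) * cs (\<subset>) (Ab x)"
    unfolding cs_def sum_product sum.cartesian_product by (simp add: case_prod_beta)
  also have "cs (\<subset>) (Ab x) = h x" unfolding h_def cs_def chs_flip[of "(\<subset>)"] ..
  finally show ?thesis using Bl_cs[OF x] by simp
qed

lemma main_ctx: "(\<Sum>x\<in>G. omega x * (1 - chi_whitney (unit_sphere G x))) = chi G"
proof -
  have "(\<Sum>x\<in>G. omega x * (1 - chi_whitney (unit_sphere G x))) = (\<Sum>x\<in>G. h x)"
  proof (intro sum.cong refl)
    fix x assume x: "x \<in> G"
    have "finite (unit_sphere G x)" using finG by (simp add: unit_sphere_def)
    then have "1 - chi_whitney (unit_sphere G x) = omega x * h x"
      using cw_cs[of "unit_sphere G x"] sphere_cs[OF x] by simp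
    then show "omega x * (1 - chi_whitney (unit_sphere G x)) = h x"
      using omega_sq[of x] by (simp add: mult.assoc[symmetric])
  qed
  also have "\<dots> = (\<Sum>m\<in>G. h m * (\<Sum>x\<in>{x\<in>G. x \<subseteq> m}. omega x))"
  proof (intro sum.cong refl)
    fix m assume m: "m \<in> G"
    show "h m = h m * (\<Sum>x\<in>{x\<in>G. x \<subseteq> m}. omega x)"
      using downG[OF m] omega_sum[of m] memG[OF m] by simp
  qed
  also have "\<dots> = (\<Sum>m\<in>G. \<Sum>x\<in>{x\<in>G. x \<subseteq> m}. omega x * h m)"
    by (simp add: sum_distrib_left mult.commute)
  also have "\<dots> = (\<Sum>x\<in>G. \<Sum>m\<in>{m\<in>G. x \<subseteq> m}. omega x * h m)"
    by (rule sum.swap_restrict[OF finG finG, symmetric])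
  also have "\<dots> = (\<Sum>x\<in>G. omega x)"
  proof (intro sum.cong refl)
    fix x assume x: "x \<in> G"
    show "(\<Sum>m\<in>{m\<in>G. x \<subseteq> m}. omega x * h m) = omega x"
      using h_sum[OF x] by (simp add: sum_distrib_left[symmetric])
  qed
  finally show ?thesis by (simp add: chi_def)
qed

end

theorem mainTheorem8:
  fixes G :: "'a set set"
  assumes "is_asc G"
  shows "(\<Sum>x\<in>G. omega x * (1 - chi_whitney (unit_sphere G x))) = chi G"
  using main_ctx[OF assms] .

end
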